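(* For all positive integers $s,k$ and every integer $n\geq 3$, the graph $sF_{n+1}\cup kF_n$ (the disjoint union of $s$ copies of $F_{n+1}$ and $k$ copies of $F_n$) is $C_3$-supermagic.
   Context: All graphs are finite and simple. For a graph $H$, a graph $G=(V,E)$ has an $H$-covering if every edge of $G$ belongs to a subgraph of $G$ isomorphic to $H$. For such $G$, an $H$-magic labeling is a bijection $\lambda: V\cup E\to\{1,2,\dots,|V|+|E|\}$ for which there is a constant $c$ such that for every subgraph $H'=(V',E')$ of $G$ isomorphic to $H$, $\sum_{v\in V'}\lambda(v)+\sum_{e\in E'}\lambda(e)=c$. It is $H$-supermagic if moreover $\{\lambda(v):v\in V\}=\{1,\dots,|V|\}$; $G$ is $H$-supermagic if it admits such a labeling. $C_k$ is the cycle of length $k$. $sG$ denotes the disjoint union of $s$ copies of $G$, and $\cup$ denotes disjoint union. For $n\geq 3$, the fan $F_n=K_1+P_n$ has vertices $c,v_1,\dots,v_n$ and edges $cv_i$ ($1\le i\le n$) and $v_iv_{i+1}$ ($1\le i\le n-1$). *)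

theory Defs
  imports Main
begin

text \<open>A graph is a pair (vertex set, edge set); edges are 2-element vertex sets.\<close>
type_synonym 'a graph = "'a set \<times> 'a set set"

definition verts :: "'a graph \<Rightarrow> 'a set" where "verts G = fst G"
definition edges :: "'a graph \<Rightarrow> 'a set set" where "edges G = snd G"

definition subgraph :: "'a graph \<Rightarrow> 'a graph \<Rightarrow> bool" where
  "subgraph H G \<longleftrightarrow> verts H \<subseteq> verts G \<and> edges H \<subseteq> edges G
     \<and> (\<forall>e\<in>edges H. e \<subseteq> verts H)"

definition graph_iso :: "'a graph \<Rightarrow> 'b graph \<Rightarrow> bool" where
  "graph_iso G H \<longleftrightarrow> (\<exists>f. bij_betw f (verts G) (verts H)
      \<and> (\<lambda>e. f ` e) ` edges G = edges H)"

definition H_subgraphs :: "'a graph \<Rightarrow> 'b graph \<Rightarrow> 'a graph set" where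
  "H_subgraphs G H = {G'. subgraph G' G \<and> graph_iso G' H}"

definition H_covering :: "'a graph \<Rightarrow> 'b graph \<Rightarrow> bool" where
  "H_covering G H \<longleftrightarrow> (\<forall>e\<in>edges G. \<exists>G'\<in>H_subgraphs G H. e \<in> edges G')"

definition H_supermagic_labeling ::
    "'a graph \<Rightarrow> 'b graph \<Rightarrow> ('a + 'a set \<Rightarrow> nat) \<Rightarrow> bool" where
  "H_supermagic_labeling G H lam \<longleftrightarrow>
     bij_betw lam (Inl ` verts G \<union> Inr ` edges G) {1..card (verts G) + card (edges G)}
     \<and> lam ` (Inl ` verts G) = {1..card (verts G)}
     \<and> (\<exists>c. \<forall>G'\<in>H_subgraphs G H.
            (\<Sum>v\<in>verts G'. lam (Inl v)) + (\<Sum>e\<in>edges G'. lam (Inr e)) = c)"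

definition H_supermagic :: "'a graph \<Rightarrow> 'b graph \<Rightarrow> bool" where
  "H_supermagic G H \<longleftrightarrow> H_covering G H \<and> (\<exists>lam. H_supermagic_labeling G H lam)"

definition C3 :: "nat graph" where
  "C3 = ({0,1,2}, {{0,1},{1,2},{0,2}})"

text \<open>The fan F_n = K_1 + P_n: centre 0, path vertices 1..n.\<close>
definition fan :: "nat \<Rightarrow> nat graph" where
  "fan n = ({0..n}, {{0,i} | i. 1 \<le> i \<and> i \<le> n} \<union> {{i, i+1} | i. 1 \<le> i \<and> i \<le> n - 1})"

definition copies :: "nat \<Rightarrow> 'a graph \<Rightarrow> (nat \<times> 'a) graph" where
  "copies s G = ({(i,v). i < s \<and> v \<in> verts G},
                 {(\<lambda>v. (i,v)) ` e | i e. i < s \<and> e \<in> edges G})"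

definition gunion :: "'a graph \<Rightarrow> 'b graph \<Rightarrow> ('a + 'b) graph" where
  "gunion G1 G2 = (Inl ` verts G1 \<union> Inr ` verts G2,
                   (\<lambda>e. Inl ` e) ` edges G1 \<union> (\<lambda>e. Inr ` e) ` edges G2)"

end

theory Submission
  imports Defs
begin

lemma sum_block_image:
  "(\<lambda>(j,v). (\<Sum>i<j. g i) + v) ` Sigma {..<F} (\<lambda>j. {1..g j}) = {1..(\<Sum>i<F. (g::nat\<Rightarrow>nat) i)}"
proof (induction F)
  case 0
  then show ?case by simp
next
  case (Suc F)
  have "Sigma {..<Suc F} (\<lambda>j. {1..g j}) = Sigma {..<F} (\<lambda>j. {1..g j}) \<union> {F} \<times> {1..g F}"
    by (auto simp: less_Suc_eq)
  moreover have "(\<lambda>(j,v). (\<Sum>i<j. g i) + v) ` ({F} \<times> {1..g F}) = (\<lambda>v. (\<Sum>i<F. g i) + v) ` {1..g F}"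
    by (auto simp: image_def)
  moreover have "(\<lambda>v. (\<Sum>i<F. g i) + v) ` {1..g F} = {(\<Sum>i<F. g i)+1..(\<Sum>i<F. g i) + g F}"
    by (simp add: image_add_atLeastAtMost)
  moreover have "{1..(\<Sum>i<F. g i)} \<union> {(\<Sum>i<F. g i)+1..(\<Sum>i<F. g i) + g F} = {1..(\<Sum>i<Suc F. g i)}"
    by auto
  ultimately show ?case using Suc by (simp only: image_Un)
qed

definition xl :: "nat \<Rightarrow> nat \<Rightarrow> nat" where
  "xl P t = (if odd t then (t+1) div 2 else (P+1) div 2 + t div 2)"

lemma xl_pair: "t \<ge> 1 \<Longrightarrow> xl P t + xl P (Suc t) = t + 1 + (P+1) div 2"
  unfolding xl_def by (cases "odd t") (auto elim!: oddE evenE)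

lemma xl_image: "xl P ` {1..P} = {1..P}"
proof
  show "xl P ` {1..P} \<subseteq> {1..P}"
    unfolding xl_def by (auto elim!: oddE evenE)
  show "{1..P} \<subseteq> xl P ` {1..P}"
  proof
    fix y assume y: "y \<in> {1..P}"
    show "y \<in> xl P ` {1..P}"
    proof (cases "y \<le> (P+1) div 2")
      case True
      then have "xl P (2*y - 1) = y" "2*y-1 \<in> {1..P}" using y unfolding xl_def by auto
      then show ?thesis by (metis image_eqI)
    next
      case False
      then have "xl P (2*(y - (P+1) div 2)) = y" "2*(y - (P+1) div 2) \<in> {1..P}" using y unfolding xl_def by auto
      then show ?thesis by (metis image_eqI)
    qed
  qed
qed


lemma tri_iso:
  assumes "distinct [a,b,c]"
  shows "graph_iso ({a,b,c}, {{a,b},{b,c},{a,c}}) C3"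
proof -
  define f where "f = (\<lambda>x. if x = a then 0 else if x = b then 1 else (2::nat))"
  have fa: "f a = 0" "f b = 1" "f c = 2" using assms by (auto simp: f_def)
  have "bij_betw f {a,b,c} {0,1,2}"
    unfolding bij_betw_def inj_on_def using assms fa by auto
  moreover have "(\<lambda>e. f ` e) ` {{a,b},{b,c},{a,c}} = {{0,1},{1,2},{0,2}}"
    using fa by auto
  ultimately show ?thesis unfolding graph_iso_def C3_def verts_def edges_def by auto
qed

lemma iso_tri:
  assumes "graph_iso G' C3" and "\<forall>e\<in>edges G'. e \<subseteq> verts G'"
  shows "\<exists>a b c. distinct [a,b,c] \<and> verts G' = {a,b,c} \<and> edges G' = {{a,b},{b,c},{a,c}}"
proof -
  obtain f where bf: "bij_betw f (verts G') {0,1,2::nat}"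
     and ef: "(\<lambda>e. f ` e) ` edges G' = {{0,1},{1,2},{0,2}}"
    using assms(1) unfolding graph_iso_def C3_def verts_def edges_def by auto
  define g where "g = inv_into (verts G') f"
  have bg: "bij_betw g {0,1,2} (verts G')" unfolding g_def using bf by (rule bij_betw_inv_into)
  have vg: "verts G' = {g 0, g 1, g 2}" using bg unfolding bij_betw_def by auto
  have dg: "distinct [g 0, g 1, g 2]" using bg unfolding bij_betw_def inj_on_def by auto
  have injf: "inj_on f (verts G')" using bf by (simp add: bij_betw_def)
  have "edges G' = (\<lambda>S. g ` S) ` ((\<lambda>e. f ` e) ` edges G')"
  proof -
    have "\<And>e. e \<in> edges G' \<Longrightarrow> g ` (f ` e) = e"
      unfolding g_def using injf assms(2) by (simp add: inv_into_image_cancel)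
    then show ?thesis by (simp add: image_image)
  qed
  also have "\<dots> = {{g 0, g 1},{g 1, g 2},{g 0, g 2}}" using ef by simp
  finally show ?thesis using vg dg by blast
qed

definition Rn :: "nat \<Rightarrow> nat \<Rightarrow> nat \<Rightarrow> bool" where
  "Rn M x y \<longleftrightarrow> (x = 0 \<and> 1 \<le> y \<and> y \<le> M) \<or> (y = 0 \<and> 1 \<le> x \<and> x \<le> M)
     \<or> (1 \<le> x \<and> y = Suc x \<and> y \<le> M) \<or> (1 \<le> y \<and> x = Suc y \<and> x \<le> M)"

lemma tri_num0:
  assumes "x = 0" "Rn M x y" "Rn M y z" "Rn M x z" "distinct [x,y,z]"
  shows "\<exists>v. 1 \<le> v \<and> Suc v \<le> M \<and> {x,y,z} = {0,v,Suc v}"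
proof (cases "y < z")
  case True
  then have "z = Suc y" "1 \<le> y" "z \<le> M" using assms by (auto simp: Rn_def)
  then show ?thesis using assms by auto
next
  case False
  then have "y = Suc z" "1 \<le> z" "y \<le> M" using assms by (auto simp: Rn_def)
  then show ?thesis using assms by (intro exI[of _ z]) auto
qed

lemma Rn_sym: "Rn M x y = Rn M y x" by (auto simp: Rn_def)

lemma tri_num:
  assumes "Rn M x y" "Rn M y z" "Rn M x z" "distinct [x,y,z]"
  shows "\<exists>v. 1 \<le> v \<and> Suc v \<le> M \<and> {x,y,z} = {0,v,Suc v}"
proof -
  have "x = 0 \<or> y = 0 \<or> z = 0" using assms by (auto simp: Rn_def)
  then show ?thesis
  proof (elim disjE)
    assume "x = 0" then show ?thesis using tri_num0[of x M y z] assms by auto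
  next
    assume "y = 0" then have "\<exists>v. 1 \<le> v \<and> Suc v \<le> M \<and> {y,x,z} = {0,v,Suc v}"
      using tri_num0[of y M x z] assms Rn_sym by auto
    then show ?thesis by (simp add: insert_commute)
  next
    assume "z = 0" then have "\<exists>v. 1 \<le> v \<and> Suc v \<le> M \<and> {z,x,y} = {0,v,Suc v}"
      using tri_num0[of z M x y] assms Rn_sym by auto
    then show ?thesis by (simp add: insert_commute)
  qed
qed

lemma pairs3:
  assumes "distinct [a,b,c]"
  shows "{{a,b},{b,c},{a,c}} = {e. \<exists>x y. x \<in> {a,b,c} \<and> y \<in> {a,b,c} \<and> x \<noteq> y \<and> e = {x,y}}"
  using assms by (auto simp: insert_commute)

locale fanu =
  fixes F :: nat and m :: "nat \<Rightarrow> nat" and emb :: "nat \<times> nat \<Rightarrow> 'a" and iota :: "'a \<Rightarrow> nat \<times> nat"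
  assumes m2: "\<And>j. j < F \<Longrightarrow> 2 \<le> m j"
  and inv: "\<And>j v. j < F \<Longrightarrow> v \<le> m j \<Longrightarrow> iota (emb (j,v)) = (j,v)"
begin

definition "D = Sigma {..<F} (\<lambda>j. {..m j})"
definition "S1 = Sigma {..<F} (\<lambda>j. {1..m j})"
definition "S2 = Sigma {..<F} (\<lambda>j. {1..m j - 1})"
definition "off j = (\<Sum>i<j. m i)"
definition "PP = off F"
definition "spk p = {emb (fst p, 0), emb p}"
definition "pth p = {emb p, emb (fst p, Suc (snd p))}"
definition "FG = (emb ` D, spk ` S1 \<union> pth ` S2)"
definition "tt p = off (fst p) + snd p"
definition "vl p = (if snd p = 0 then PP + 1 + fst p else xl PP (tt p))"
definition "nV = PP + F"
definition "aa = nV + PP + 1"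
definition "el S = (if \<exists>p\<in>S. snd p = 0 then aa - Max (tt ` S) else nV + PP + Min (tt ` S) - Max (fst ` S))"
definition "lam x = (case x of Inl z \<Rightarrow> vl (iota z) | Inr e \<Rightarrow> el (iota ` e))"

lemma D_iff: "(j,v) \<in> D \<longleftrightarrow> j < F \<and> v \<le> m j" by (simp add: D_def)

lemma inj_emb: "inj_on emb D"
  by (rule inj_on_inverseI[where g=iota]) (auto simp: D_def inv)

lemma emb_eq: "(j,v) \<in> D \<Longrightarrow> (j',v') \<in> D \<Longrightarrow> emb (j,v) = emb (j',v') \<longleftrightarrow> j = j' \<and> v = v'"
  using inj_emb unfolding inj_on_def by blast

lemma off_mono: "j \<le> j' \<Longrightarrow> off j \<le> off j'"
  unfolding off_def by (rule sum_mono2) auto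

lemma off_Suc: "off (Suc j) = off j + m j" by (simp add: off_def)

lemma j_le_off: "j \<le> F \<Longrightarrow> j \<le> off j"
proof (induction j)
  case (Suc j) then show ?case using m2[of j] by (simp add: off_Suc)
qed simp

lemma off_S2: "j \<le> F \<Longrightarrow> off j = (\<Sum>i<j. m i - 1) + j"
proof (induction j)
  case (Suc j) then show ?case using m2[of j] by (simp add: off_Suc)
qed (simp add: off_def)

lemma tt_S1: "tt ` S1 = {1..PP}"
  using sum_block_image[of m F] unfolding tt_def S1_def PP_def off_def
  by (simp add: case_prod_beta' cong: image_cong)

definition "TT = (\<Sum>i<F. m i - 1)"

lemma PP_TT: "PP = TT + F" using off_S2[of F] by (simp add: PP_def TT_def)

lemma S1_iff: "(j,v) \<in> S1 \<longleftrightarrow> j < F \<and> 1 \<le> v \<and> v \<le> m j" by (simp add: S1_def)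
lemma S2_iff: "(j,v) \<in> S2 \<longleftrightarrow> j < F \<and> 1 \<le> v \<and> v < m j" using m2[of j] by (auto simp: S2_def)

lemma tt_le: "(j,v) \<in> S1 \<Longrightarrow> tt (j,v) \<le> PP"
  using tt_S1 by auto

lemma j_le_tt: "(j,v) \<in> S1 \<Longrightarrow> j \<le> tt (j,v)"
  using j_le_off[of j] by (auto simp: tt_def S1_iff)

lemma path_img: "(\<lambda>p. nV + PP + tt p - fst p) ` S2 = {nV+PP+1..nV+PP+TT}"
proof -
  have "\<And>j v. (j,v) \<in> S2 \<Longrightarrow> nV + PP + tt (j,v) - j = nV + PP + ((\<Sum>i<j. m i - 1) + v)"
    using off_S2 by (auto simp: S2_iff tt_def)
  then have "(\<lambda>p. nV + PP + tt p - fst p) ` S2 = (\<lambda>t. nV + PP + t) ` ((\<lambda>(j,v). (\<Sum>i<j. m i - 1) + v) ` S2)"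
    by (force simp: image_iff)
  also have "(\<lambda>(j,v). (\<Sum>i<j. m i - 1) + v) ` S2 = {1..TT}"
    unfolding S2_def TT_def by (rule sum_block_image)
  finally show ?thesis by (simp add: image_add_atLeastAtMost)
qed

lemma spoke_img: "(\<lambda>p. aa - tt p) ` S1 = {nV+1..nV+PP}"
proof -
  have "(\<lambda>p. aa - tt p) ` S1 = (\<lambda>t. aa - t) ` {1..PP}" using tt_S1 by (simp add: image_image[symmetric])
  also have "\<dots> = {nV+1..nV+PP}"
  proof
    show "(\<lambda>t. aa - t) ` {1..PP} \<subseteq> {nV+1..nV+PP}" by (auto simp: aa_def)
    show "{nV+1..nV+PP} \<subseteq> (\<lambda>t. aa - t) ` {1..PP}"
    proof
      fix y assume "y \<in> {nV+1..nV+PP}"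
      then have "aa - (aa - y) = y" "aa - y \<in> {1..PP}" by (auto simp: aa_def)
      then show "y \<in> (\<lambda>t. aa - t) ` {1..PP}" by (metis image_eqI)
    qed
  qed
  finally show ?thesis .
qed

lemma vl_img: "vl ` D = {1..nV}"
proof -
  have "D = (\<lambda>j. (j,0)) ` {..<F} \<union> S1" by (auto simp: D_def S1_def image_iff)
  moreover have "vl ` ((\<lambda>j. (j,0)) ` {..<F}) = (\<lambda>j. PP + 1 + j) ` {..<F}"
    unfolding image_image by (simp add: vl_def)
  moreover have "vl ` S1 = xl PP ` (tt ` S1)"
    unfolding image_image by (rule image_cong) (auto simp: vl_def S1_def)
  ultimately have "vl ` D = (\<lambda>j. PP + 1 + j) ` {..<F} \<union> xl PP ` (tt ` S1)"
    by (simp add: image_Un)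
  also have "(\<lambda>j. PP + 1 + j) ` {..<F} = {PP+1..PP+F}"
  proof
    show "(\<lambda>j. PP + 1 + j) ` {..<F} \<subseteq> {PP+1..PP+F}" by auto
    show "{PP+1..PP+F} \<subseteq> (\<lambda>j. PP + 1 + j) ` {..<F}"
    proof
      fix y assume "y \<in> {PP+1..PP+F}"
      then have "PP + 1 + (y - PP - 1) = y" "y - PP - 1 \<in> {..<F}" by auto
      then show "y \<in> (\<lambda>j. PP + 1 + j) ` {..<F}" by (metis image_eqI)
    qed
  qed
  finally show ?thesis using tt_S1 xl_image by (auto simp: nV_def)
qed

lemma iota_spk: "(j,v) \<in> S1 \<Longrightarrow> iota ` spk (j,v) = {(j,0),(j,v)}"
  by (auto simp: spk_def S1_iff inv)

lemma iota_pth: "(j,v) \<in> S2 \<Longrightarrow> iota ` pth (j,v) = {(j,v),(j,Suc v)}"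
  by (auto simp: pth_def S2_iff inv)

lemma lam_v: "p \<in> D \<Longrightarrow> lam (Inl (emb p)) = vl p"
  by (cases p) (simp add: lam_def D_iff inv)

lemma lam_spk: "(j,v) \<in> S1 \<Longrightarrow> lam (Inr (spk (j,v))) = aa - tt (j,v)"
  by (simp add: lam_def iota_spk el_def tt_def)

lemma lam_pth: "(j,v) \<in> S2 \<Longrightarrow> lam (Inr (pth (j,v))) = nV + PP + tt (j,v) - j"
  by (auto simp: lam_def iota_pth el_def tt_def S2_iff)

lemma spk_inj: "inj_on spk S1"
proof (rule inj_onI)
  fix p q assume "p \<in> S1" "q \<in> S1" "spk p = spk q"
  then have "iota ` spk p = iota ` spk q" by simp
  with \<open>p \<in> S1\<close> \<open>q \<in> S1\<close> show "p = q"
    by (cases p, cases q) (auto simp: iota_spk S1_iff doubleton_eq_iff)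
qed

lemma pth_inj: "inj_on pth S2"
proof (rule inj_onI)
  fix p q assume "p \<in> S2" "q \<in> S2" "pth p = pth q"
  then have "iota ` pth p = iota ` pth q" by simp
  with \<open>p \<in> S2\<close> \<open>q \<in> S2\<close> show "p = q"
    by (cases p, cases q) (auto simp: iota_pth S2_iff doubleton_eq_iff)
qed

lemma spk_pth_disj: "spk ` S1 \<inter> pth ` S2 = {}"
proof (rule ccontr)
  assume "spk ` S1 \<inter> pth ` S2 \<noteq> {}"
  then obtain p q where pq: "p \<in> S1" "q \<in> S2" "spk p = pth q" by auto
  obtain j v j' v' where pp: "p = (j,v)" "q = (j',v')" by fastforce
  have "{(j,0),(j,v)} = {(j',v'),(j',Suc v')}"
    using pq pp iota_spk iota_pth by metis
  with pq pp show False
    by (auto simp: S1_iff S2_iff doubleton_eq_iff)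
qed

lemma fin_D: "finite D" and fin_S1: "finite S1" and fin_S2: "finite S2"
  by (auto simp: D_def S1_def S2_def)

lemma card_V: "card (verts FG) = nV"
proof -
  have "card (verts FG) = card D" using inj_emb by (simp add: FG_def verts_def card_image)
  also have "\<dots> = (\<Sum>j<F. Suc (m j))" by (simp add: D_def card_SigmaI)
  also have "\<dots> = PP + F" unfolding PP_def off_def by (induct F) auto
  finally show ?thesis by (simp add: nV_def)
qed

lemma card_E: "card (edges FG) = PP + TT"
proof -
  have "card (edges FG) = card (spk ` S1) + card (pth ` S2)"
    unfolding FG_def edges_def using spk_pth_disj fin_S1 fin_S2 by (simp add: card_Un_disjoint)
  also have "\<dots> = card S1 + card S2" using spk_inj pth_inj by (simp add: card_image)
  also have "card S1 = PP" by (simp add: S1_def card_SigmaI PP_def off_def)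
  also have "card S2 = TT" by (simp add: S2_def card_SigmaI TT_def)
  finally show ?thesis .
qed

lemma lamV: "lam ` (Inl ` verts FG) = {1..card (verts FG)}"
proof -
  have "lam ` (Inl ` verts FG) = vl ` D"
    unfolding FG_def verts_def fst_conv image_image by (rule image_cong) (auto simp: lam_v)
  then show ?thesis using vl_img card_V by simp
qed

lemma lamE: "lam ` (Inr ` edges FG) = {nV+1..nV+PP+TT}"
proof -
  have "lam ` (Inr ` spk ` S1) = (\<lambda>p. aa - tt p) ` S1"
    unfolding image_image by (rule image_cong) (auto simp: lam_spk)
  moreover have "lam ` (Inr ` pth ` S2) = (\<lambda>p. nV + PP + tt p - fst p) ` S2"
    unfolding image_image by (rule image_cong) (auto simp: lam_pth)
  ultimately have "lam ` (Inr ` edges FG) = {nV+1..nV+PP} \<union> {nV+PP+1..nV+PP+TT}"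
    using spoke_img path_img by (simp add: FG_def edges_def image_Un)
  also have "\<dots> = {nV+1..nV+PP+TT}" by auto
  finally show ?thesis .
qed

lemma lam_bij: "bij_betw lam (Inl ` verts FG \<union> Inr ` edges FG) {1..card (verts FG) + card (edges FG)}"
proof -
  let ?A = "Inl ` verts FG \<union> Inr ` edges FG"
  have img: "lam ` ?A = {1..card (verts FG) + card (edges FG)}"
    using lamV lamE card_V card_E by (auto simp: image_Un)
  have finV: "finite (verts FG)" using fin_D by (simp add: FG_def verts_def)
  have finE: "finite (edges FG)" using fin_S1 fin_S2 by (simp add: FG_def edges_def)
  have cA: "card ?A = card (verts FG) + card (edges FG)"
    using finV finE by (subst card_Un_disjoint) (auto simp: card_image)
  have "inj_on lam ?A"
    by (rule eq_card_imp_inj_on) (use finV finE img cA in auto)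
  then show ?thesis using img by (simp add: bij_betw_def)
qed

lemma iota_emb: "p \<in> D \<Longrightarrow> iota (emb p) = p" by (cases p) (auto simp: D_iff inv)

lemma edge_adj:
  assumes "p \<in> D" "q \<in> D" "{emb p, emb q} \<in> edges FG"
  shows "fst p = fst q \<and> Rn (m (fst p)) (snd p) (snd q)"
proof -
  have pq: "iota ` {emb p, emb q} = {p,q}" using assms iota_emb by auto
  from assms(3) consider (a) r where "r \<in> S1" "{emb p, emb q} = spk r"
    | (b) r where "r \<in> S2" "{emb p, emb q} = pth r"
    unfolding FG_def edges_def by auto
  then show ?thesis
  proof cases
    case a
    obtain j v where r: "r = (j,v)" by fastforce
    have "{p,q} = {(j,0),(j,v)}" using pq a r iota_spk by metis
    then show ?thesis using a r by (auto simp: doubleton_eq_iff S1_iff Rn_def)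
  next
    case b
    obtain j v where r: "r = (j,v)" by fastforce
    have "{p,q} = {(j,v),(j,Suc v)}" using pq b r iota_pth by metis
    then show ?thesis using b r by (auto simp: doubleton_eq_iff S2_iff Rn_def)
  qed
qed

definition "Tri j v = ({emb (j,0), emb (j,v), emb (j,Suc v)},
   {{emb (j,0), emb (j,v)}, {emb (j,v), emb (j,Suc v)}, {emb (j,0), emb (j,Suc v)}})"

lemma Tri_distinct: "(j,v) \<in> S2 \<Longrightarrow> distinct [emb (j,0), emb (j,v), emb (j,Suc v)]"
  by (auto simp: emb_eq D_iff S2_iff)

lemma Tri_sub: assumes "(j,v) \<in> S2" shows "Tri j v \<in> H_subgraphs FG C3"
proof -
  have s1: "(j,v) \<in> S1" "(j,Suc v) \<in> S1" using assms by (auto simp: S1_iff S2_iff)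
  have "spk (j,v) \<in> edges FG" "spk (j,Suc v) \<in> edges FG" "pth (j,v) \<in> edges FG"
    using s1 assms by (simp_all add: FG_def edges_def)
  then have "{emb (j,0), emb (j,v)} \<in> edges FG" "{emb (j,0), emb (j,Suc v)} \<in> edges FG"
     "{emb (j,v), emb (j,Suc v)} \<in> edges FG" by (simp_all add: spk_def pth_def)
  moreover have "{emb (j,0), emb (j,v), emb (j,Suc v)} \<subseteq> verts FG"
    using assms by (auto simp: FG_def verts_def D_iff S2_iff)
  ultimately have "subgraph (Tri j v) FG"
    unfolding subgraph_def Tri_def verts_def edges_def by auto
  moreover have "graph_iso (Tri j v) C3" unfolding Tri_def by (rule tri_iso[OF Tri_distinct[OF assms]])
  ultimately show ?thesis by (simp add: H_subgraphs_def)
qed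

lemma sub_Tri:
  assumes "G' \<in> H_subgraphs FG C3"
  shows "\<exists>j v. (j,v) \<in> S2 \<and> G' = Tri j v"
proof -
  have sg: "subgraph G' FG" and iso: "graph_iso G' C3" using assms by (auto simp: H_subgraphs_def)
  obtain a b c where d: "distinct [a,b,c]" and vG: "verts G' = {a,b,c}"
      and eG: "edges G' = {{a,b},{b,c},{a,c}}"
    using iso_tri[OF iso] sg by (auto simp: subgraph_def)
  have "{a,b,c} \<subseteq> emb ` D" using sg vG by (auto simp: subgraph_def FG_def verts_def)
  then obtain pa pb pc where p: "pa \<in> D" "pb \<in> D" "pc \<in> D" "a = emb pa" "b = emb pb" "c = emb pc"
    by auto
  have E: "{emb pa, emb pb} \<in> edges FG" "{emb pb, emb pc} \<in> edges FG" "{emb pa, emb pc} \<in> edges FG"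
    using sg eG p by (auto simp: subgraph_def)
  note A = edge_adj[OF p(1,2) E(1)] edge_adj[OF p(2,3) E(2)] edge_adj[OF p(1,3) E(3)]
  obtain j x y z where pj: "pa = (j,x)" "pb = (j,y)" "pc = (j,z)"
    using A by (metis prod.collapse)
  have dn: "distinct [x,y,z]" using d p pj by auto
  obtain v where v: "1 \<le> v" "Suc v \<le> m j" "{x,y,z} = {0,v,Suc v}"
    using tri_num[of "m j" x y z] A pj dn by auto
  have jF: "j < F" using p pj by (simp add: D_iff)
  have "{a,b,c} = emb ` Pair j ` {x,y,z}" using p pj by auto
  also have "\<dots> = {emb (j,0), emb (j,v), emb (j,Suc v)}" using v by simp
  finally have vv: "verts G' = {emb (j,0), emb (j,v), emb (j,Suc v)}" using vG by simp
  have s2: "(j,v) \<in> S2" using v jF by (simp add: S2_iff)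
  have "edges G' = {{emb (j,0), emb (j,v)}, {emb (j,v), emb (j,Suc v)}, {emb (j,0), emb (j,Suc v)}}"
    unfolding eG pairs3[OF d] pairs3[OF Tri_distinct[OF s2]] vv[symmetric] vG ..
  then have "G' = Tri j v" using vv unfolding Tri_def verts_def edges_def by (simp add: prod_eq_iff)
  then show ?thesis using s2 by blast
qed

definition "Wc = 2*aa + nV + 2*PP + (PP+1) div 2 + 1"

lemma Tri_weight:
  assumes "(j,v) \<in> S2"
  shows "(\<Sum>x\<in>verts (Tri j v). lam (Inl x)) + (\<Sum>e\<in>edges (Tri j v). lam (Inr e)) = Wc"
proof -
  have s1: "(j,v) \<in> S1" "(j,Suc v) \<in> S1" using assms by (auto simp: S1_iff S2_iff)
  have dD: "(j,0) \<in> D" "(j,v) \<in> D" "(j,Suc v) \<in> D" using assms by (auto simp: D_iff S2_iff)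
  note dist = Tri_distinct[OF assms]
  have sv: "(\<Sum>x\<in>verts (Tri j v). lam (Inl x)) = vl (j,0) + vl (j,v) + vl (j,Suc v)"
    using dist by (simp add: Tri_def verts_def lam_v dD)
  have e1: "{emb (j,0), emb (j,v)} = spk (j,v)" "{emb (j,0), emb (j,Suc v)} = spk (j,Suc v)"
     "{emb (j,v), emb (j,Suc v)} = pth (j,v)" by (simp_all add: spk_def pth_def)
  have de: "spk (j,v) \<noteq> pth (j,v)" "spk (j,Suc v) \<noteq> pth (j,v)" "spk (j,v) \<noteq> spk (j,Suc v)"
    using dist by (auto simp: spk_def pth_def doubleton_eq_iff)
  have se: "(\<Sum>e\<in>edges (Tri j v). lam (Inr e)) = (aa - tt (j,v)) + (nV + PP + tt (j,v) - j) + (aa - tt (j, Suc v))"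
    unfolding Tri_def edges_def snd_conv e1 using de s1 assms
    by (simp add: lam_spk lam_pth)
  have t1: "tt (j, Suc v) = Suc (tt (j,v))" by (simp add: tt_def)
  have tle: "tt (j, Suc v) \<le> PP" using tt_le[OF s1(2)] .
  have jle: "j \<le> tt (j,v)" using j_le_tt[OF s1(1)] .
  have vt: "vl (j,0) + vl (j,v) + vl (j,Suc v) = PP + 1 + j + (tt (j,v) + 1 + (PP+1) div 2)"
    using xl_pair[of "tt (j,v)" PP] assms t1 by (simp add: vl_def S2_iff tt_def)
  show ?thesis using sv se vt t1 tle jle by (simp add: Wc_def aa_def)
qed

lemma covering: "H_covering FG C3"
  unfolding H_covering_def
proof
  fix e assume "e \<in> edges FG"
  then consider (a) j v where "(j,v) \<in> S1" "e = spk (j,v)" | (b) j v where "(j,v) \<in> S2" "e = pth (j,v)"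
    unfolding FG_def edges_def by auto
  then show "\<exists>G'\<in>H_subgraphs FG C3. e \<in> edges G'"
  proof cases
    case a
    show ?thesis
    proof (cases "v < m j")
      case True
      then have "(j,v) \<in> S2" using a by (simp add: S1_iff S2_iff)
      moreover have "e \<in> edges (Tri j v)" using a by (simp add: Tri_def edges_def spk_def)
      ultimately show ?thesis using Tri_sub by blast
    next
      case False
      then have m: "v = m j" "j < F" using a by (auto simp: S1_iff)
      then have "(j,v-1) \<in> S2" using m2[of j] by (simp add: S2_iff)
      moreover have "e \<in> edges (Tri j (v-1))" using a m m2[of j]
        by (simp add: Tri_def edges_def spk_def)
      ultimately show ?thesis using Tri_sub by blast
    qed
  next
    case b
    then have "e \<in> edges (Tri j v)" by (simp add: Tri_def edges_def pth_def)
    then show ?thesis using Tri_sub b by blast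
  qed
qed

theorem FG_supermagic: "H_supermagic FG C3"
  unfolding H_supermagic_def H_supermagic_labeling_def
proof (intro conjI exI[of _ lam])
  show "H_covering FG C3" by (rule covering)
  show "bij_betw lam (Inl ` verts FG \<union> Inr ` edges FG) {1..card (verts FG) + card (edges FG)}"
    by (rule lam_bij)
  show "lam ` Inl ` verts FG = {1..card (verts FG)}" by (rule lamV)
  show "\<exists>c. \<forall>G'\<in>H_subgraphs FG C3. (\<Sum>v\<in>verts G'. lam (Inl v)) + (\<Sum>e\<in>edges G'. lam (Inr e)) = c"
    using sub_Tri Tri_weight by metis
qed

end

lemma fan_edges: "edges (fan M) = (\<lambda>v. {0,v}) ` {1..M} \<union> (\<lambda>v. {v, Suc v}) ` {1..M-1}"
  unfolding fan_def edges_def by auto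

lemma fan_verts: "verts (fan M) = {0..M}" unfolding fan_def verts_def by simp

lemma copies_edges: "edges (copies s G) = (\<lambda>(i,e). (\<lambda>v. (i,v)) ` e) ` ({..<s} \<times> edges G)"
  unfolding copies_def edges_def by auto

lemma copies_verts: "verts (copies s G) = {..<s} \<times> verts G"
  unfolding copies_def verts_def by auto

lemma copies_fan_edges: "edges (copies s (fan M)) =
   (\<lambda>(i,v). {(i,0),(i,v)}) ` ({..<s} \<times> {1..M}) \<union> (\<lambda>(i,v). {(i,v),(i,Suc v)}) ` ({..<s} \<times> {1..M-1})"
  (is "?L = ?R")
proof
  show "?L \<subseteq> ?R" unfolding copies_edges fan_edges by auto
  show "?R \<subseteq> ?L"
  proof
    fix e assume "e \<in> ?R"
    then consider (a) i v where "i < s" "1 \<le> v" "v \<le> M" "e = {(i,0),(i,v)}"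
      | (b) i v where "i < s" "1 \<le> v" "v \<le> M - 1" "e = {(i,v),(i,Suc v)}" by auto
    then show "e \<in> ?L"
    proof cases
      case a
      then have "(i, {0,v}) \<in> {..<s} \<times> edges (fan M)" by (auto simp: fan_edges)
      moreover have "e = (\<lambda>(i,e). (\<lambda>v. (i,v)) ` e) (i, {0,v})" using a by simp
      ultimately show ?thesis unfolding copies_edges by blast
    next
      case b
      then have "(i, {v, Suc v}) \<in> {..<s} \<times> edges (fan M)" by (auto simp: fan_edges)
      moreover have "e = (\<lambda>(i,e). (\<lambda>v. (i,v)) ` e) (i, {v, Suc v})" using b by simp
      ultimately show ?thesis unfolding copies_edges by blast
    qed
  qed
qed

definition cemb :: "nat \<Rightarrow> nat \<times> nat \<Rightarrow> (nat \<times> nat) + (nat \<times> nat)" where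
  "cemb s p = (if fst p < s then Inl p else Inr (fst p - s, snd p))"
definition ciota :: "nat \<Rightarrow> (nat \<times> nat) + (nat \<times> nat) \<Rightarrow> nat \<times> nat" where
  "ciota s x = (case x of Inl p \<Rightarrow> p | Inr p \<Rightarrow> (s + fst p, snd p))"
definition cm :: "nat \<Rightarrow> nat \<Rightarrow> nat \<Rightarrow> nat" where
  "cm s n j = (if j < s then n + 1 else n)"

theorem theorem9:
  fixes s k n :: nat
  assumes "s \<ge> 1" and "k \<ge> 1" and "n \<ge> 3"
  shows "H_supermagic (gunion (copies s (fan (n + 1))) (copies k (fan n))) C3"
proof -
  interpret I: fanu "s+k" "cm s n" "cemb s" "ciota s"
    by unfold_locales (use assms in \<open>auto simp: cm_def cemb_def ciota_def\<close>)
  have V: "Inl ` verts (copies s (fan (n + 1))) \<union> Inr ` verts (copies k (fan n)) = cemb s ` I.D"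
    (is "?L = ?R")
  proof
    show "?L \<subseteq> ?R"
    proof
      fix x assume "x \<in> ?L"
      then consider (a) i v where "i < s" "v \<le> n+1" "x = Inl (i,v)" | (b) i v where "i < k" "v \<le> n" "x = Inr (i,v)"
        by (auto simp: copies_verts fan_verts)
      then show "x \<in> ?R"
      proof cases
        case a then have "(i,v) \<in> I.D" "x = cemb s (i,v)" by (auto simp: I.D_iff cm_def cemb_def)
        then show ?thesis by blast
      next
        case b then have "(s+i,v) \<in> I.D" "x = cemb s (s+i,v)" by (auto simp: I.D_iff cm_def cemb_def)
        then show ?thesis by blast
      qed
    qed
    show "?R \<subseteq> ?L"
      by (auto simp: I.D_def cm_def cemb_def copies_verts fan_verts split: if_splits)
  qed
  have E: "(\<lambda>e. Inl ` e) ` edges (copies s (fan (n + 1))) \<union> (\<lambda>e. Inr ` e) ` edges (copies k (fan n))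
      = I.spk ` I.S1 \<union> I.pth ` I.S2" (is "?L = ?R")
  proof
    show "?L \<subseteq> ?R"
    proof
      fix x assume "x \<in> ?L"
      then consider (a) i v where "i < s" "1 \<le> v" "v \<le> n+1" "x = Inl ` {(i,0),(i,v)}"
        | (b) i v where "i < s" "1 \<le> v" "v \<le> n" "x = Inl ` {(i,v),(i,Suc v)}"
        | (c) i v where "i < k" "1 \<le> v" "v \<le> n" "x = Inr ` {(i,0),(i,v)}"
        | (d) i v where "i < k" "1 \<le> v" "v \<le> n - 1" "x = Inr ` {(i,v),(i,Suc v)}"
        unfolding copies_fan_edges by auto
      then show "x \<in> ?R"
      proof cases
        case a then have "(i,v) \<in> I.S1" "x = I.spk (i,v)" by (auto simp: I.S1_iff cm_def cemb_def I.spk_def)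
        then show ?thesis by blast
      next
        case b then have "(i,v) \<in> I.S2" "x = I.pth (i,v)" by (auto simp: I.S2_iff cm_def cemb_def I.pth_def)
        then show ?thesis by blast
      next
        case c then have "(s+i,v) \<in> I.S1" "x = I.spk (s+i,v)" by (auto simp: I.S1_iff cm_def cemb_def I.spk_def)
        then show ?thesis by blast
      next
        case d then have "(s+i,v) \<in> I.S2" "x = I.pth (s+i,v)" by (auto simp: I.S2_iff cm_def cemb_def I.pth_def)
        then show ?thesis by blast
      qed
    qed
    show "?R \<subseteq> ?L"
    proof
      fix x assume "x \<in> ?R"
      then consider (a) j v where "(j,v) \<in> I.S1" "x = I.spk (j,v)" | (b) j v where "(j,v) \<in> I.S2" "x = I.pth (j,v)"
        by auto
      then show "x \<in> ?L"
      proof cases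
        case a
        show ?thesis
        proof (cases "j < s")
          case True
          then have "x = Inl ` {(j,0),(j,v)}" "{(j,0),(j,v)} \<in> edges (copies s (fan (n + 1)))"
            using a by (auto simp: I.spk_def cemb_def copies_fan_edges I.S1_iff cm_def)
          then show ?thesis by blast
        next
          case False
          then have "x = Inr ` {(j-s,0),(j-s,v)}" "{(j-s,0),(j-s,v)} \<in> edges (copies k (fan n))"
            using a by (auto simp: I.spk_def cemb_def copies_fan_edges I.S1_iff cm_def)
          then show ?thesis by blast
        qed
      next
        case b
        show ?thesis
        proof (cases "j < s")
          case True
          then have "x = Inl ` {(j,v),(j,Suc v)}" "{(j,v),(j,Suc v)} \<in> edges (copies s (fan (n + 1)))"
            using b by (auto simp: I.pth_def cemb_def copies_fan_edges I.S2_iff cm_def)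
          then show ?thesis by blast
        next
          case False
          then have "x = Inr ` {(j-s,v),(j-s,Suc v)}" "{(j-s,v),(j-s,Suc v)} \<in> edges (copies k (fan n))"
            using b by (auto simp: I.pth_def cemb_def copies_fan_edges I.S2_iff cm_def)
          then show ?thesis by blast
        qed
      qed
    qed
  qed
  have "gunion (copies s (fan (n + 1))) (copies k (fan n)) = I.FG"
    unfolding gunion_def I.FG_def using V E by simp
  then show ?thesis using I.FG_supermagic by simp
qed

end
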